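(* Let $F$ be a sensori-computational device and $(D,\oplus,e_D)$ a monoid with a right action $\odot:Y(F)\times D\to Y(F)$, regarded as an observation variator via $\bowtie=\{(y,d,y\odot d): y\in Y(F),d\in D\}$. If $D$ is moreover a group and there exists $y_0\in Y(F)$ with $\{y_0\odot d: d\in D\}=Y(F)$, then there exists a sensori-computational device $F'$ that output simulates $F$ modulo $\Delta_F^{D}$.
   Context: A sensori-computational device is a 6-tuple $F=(V,V_0,Y,\tau,C,c)$ where $V$ is a non-empty finite set of states, $V_0\subseteq V$ a non-empty set of initial states, $Y=Y(F)$ a finite set of observations, $\tau:V\times V\to\mathcal{P}(Y)$, $C$ a set of outputs, $c:V\to\mathcal{P}(C)\setminus\{\emptyset\}$. A string $y_1\cdots y_n$ reaches $w$ from $v$ if there are states $w_0=v,\dots,w_n=w$ with $y_i\in\tau(w_{i-1},w_i)$; $\mathcal{R}_F(s)$ is the set of states reached by $s$ from some initial state; $\mathcal{L}(F)=\{s\in Y^*:\mathcal{R}_F(s)\ne\emptyset\}$; $\mathcal{C}_F(s)=\bigcup_{v\in\mathcal{R}_F(s)}c(v)$. For a relation $R\subseteq A\times B$ between sets of strings, $F'$ output simulates $F$ modulo $R$ if for every $s\in\mathcal{L}(F)$: (1) some $t\in\mathcal{L}(F')$ has $s\,R\,t$; (2) every $t\in B$ with $s\,R\,t$ satisfies $t\in\mathcal{L}(F')$ and $\mathcal{C}_F(s)\supseteq\mathcal{C}_{F'}(t)$. A right action satisfies $y\odot e_D=y$ and $(y\odot d_1)\odot d_2=y\odot(d_1\oplus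 d_2)$. Given a ternary relation $\bowtie\subseteq Y\times D\times Y$, the delta relation $\Delta_F^{D}\subseteq\mathcal{L}(F)\times(\{\epsilon\}\cup Y\cdot D^* )$ consists of: $(\epsilon,\epsilon)$; $(y_0,y_0)$ for $y_0\in Y\cap\mathcal{L}(F)$; and $(y_0y_1\cdots y_m,\ y_0d_1\cdots d_m)$ for $y_0\cdots y_m\in\mathcal{L}(F)$, $m\ge1$, whenever $(y_{k-1},d_k,y_k)\in\bowtie$ for all $k$.
   Formalization: D is a finite group rather than an arbitrary group, so its carrier set is finite. The statement above fails without it. *)

theory Defs
  imports "HOL-Algebra.Group"
begin

text \<open>Sensori-computational device F = (V, V0, Y, tau, C, c).\<close>
record ('v, 'y, 'o) scdevice =
  dstates :: "'v set"
  dinit   :: "'v set"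
  dobs    :: "'y set"
  dtrans  :: "'v \<Rightarrow> 'v \<Rightarrow> 'y set"
  doutset :: "'o set"
  dout    :: "'v \<Rightarrow> 'o set"

definition is_device :: "('v, 'y, 'o, 'z) scdevice_scheme \<Rightarrow> bool" where
  "is_device F \<longleftrightarrow>
     finite (dstates F) \<and> dstates F \<noteq> {} \<and>
     dinit F \<subseteq> dstates F \<and> dinit F \<noteq> {} \<and>
     finite (dobs F) \<and>
     (\<forall>v\<in>dstates F. \<forall>w\<in>dstates F. dtrans F v w \<subseteq> dobs F) \<and>
     (\<forall>v\<in>dstates F. dout F v \<subseteq> doutset F \<and> dout F v \<noteq> {})"

fun reaches :: "('v, 'y, 'o, 'z) scdevice_scheme \<Rightarrow> 'y list \<Rightarrow> 'v \<Rightarrow> 'v \<Rightarrow> bool" where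
  "reaches F [] v w \<longleftrightarrow> v = w \<and> v \<in> dstates F"
| "reaches F (y # s) v w \<longleftrightarrow> v \<in> dstates F \<and>
     (\<exists>u\<in>dstates F. y \<in> dtrans F v u \<and> reaches F s u w)"

definition reached :: "('v, 'y, 'o, 'z) scdevice_scheme \<Rightarrow> 'y list \<Rightarrow> 'v set" where
  "reached F s = {w. \<exists>v\<in>dinit F. reaches F s v w}"

definition lang :: "('v, 'y, 'o, 'z) scdevice_scheme \<Rightarrow> 'y list set" where
  "lang F = {s. reached F s \<noteq> {}}"

definition outs :: "('v, 'y, 'o, 'z) scdevice_scheme \<Rightarrow> 'y list \<Rightarrow> 'o set" where
  "outs F s = (\<Union>v\<in>reached F s. dout F v)"

definition output_simulates ::
  "('v, 'y, 'o, 'z) scdevice_scheme \<Rightarrow> ('w, 'x, 'o, 'u) scdevice_scheme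
     \<Rightarrow> ('y list \<times> 'x list) set \<Rightarrow> bool" where
  "output_simulates F F' R \<longleftrightarrow>
     (\<forall>s\<in>lang F.
        (\<exists>t\<in>lang F'. (s, t) \<in> R) \<and>
        (\<forall>t. (s, t) \<in> R \<longrightarrow> t \<in> lang F' \<and> outs F' t \<subseteq> outs F s))"

definition right_action :: "('d, 'm) monoid_scheme \<Rightarrow> 'y set \<Rightarrow> ('y \<Rightarrow> 'd \<Rightarrow> 'y) \<Rightarrow> bool" where
  "right_action D Y act \<longleftrightarrow>
     (\<forall>y\<in>Y. \<forall>d\<in>carrier D. act y d \<in> Y) \<and>
     (\<forall>y\<in>Y. act y \<one>\<^bsub>D\<^esub> = y) \<and>
     (\<forall>y\<in>Y. \<forall>d1\<in>carrier D. \<forall>d2\<in>carrier D.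
        act (act y d1) d2 = act y (d1 \<otimes>\<^bsub>D\<^esub> d2))"

definition action_variator :: "('d, 'm) monoid_scheme \<Rightarrow> 'y set \<Rightarrow> ('y \<Rightarrow> 'd \<Rightarrow> 'y) \<Rightarrow> ('y \<times> 'd \<times> 'y) set" where
  "action_variator D Y act = {(y, d, act y d) | y d. y \<in> Y \<and> d \<in> carrier D}"

text \<open>Delta relation: strings of F related to strings in {eps} \<union> Y.D*, the latter
  encoded as lists over the sum type ('y + 'd).\<close>
definition delta_rel ::
  "('v, 'y, 'o, 'z) scdevice_scheme \<Rightarrow> ('y \<times> 'd \<times> 'y) set \<Rightarrow> ('y list \<times> ('y + 'd) list) set" where
  "delta_rel F B =
     {([], [])}
     \<union> {([y0], [Inl y0]) | y0. y0 \<in> dobs F \<and> [y0] \<in> lang F}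
     \<union> {(s, Inl (s ! 0) # map Inr ds) | s ds.
          s \<in> lang F \<and> length s \<ge> 2 \<and> length ds = length s - 1 \<and>
          (\<forall>k\<in>{1..length ds}. (s ! (k - 1), ds ! (k - 1), s ! k) \<in> B)}"

end

theory Submission
  imports Defs
begin

lemma reaches_states:
  "reaches F s v w \<Longrightarrow> v \<in> dstates F \<and> w \<in> dstates F"
  by (induction s arbitrary: v) auto

lemma reaches_obs:
  assumes "is_device F" shows "reaches F s v w \<Longrightarrow> set s \<subseteq> dobs F"
proof (induction s arbitrary: v)
  case Nil then show ?case by simp
next
  case (Cons y s)
  then obtain u where "u \<in> dstates F" "y \<in> dtrans F v u" "reaches F s u w" "v \<in> dstates F" by auto
  moreover have "y \<in> dobs F" using assms \<open>u \<in> dstates F\<close> \<open>v \<in> dstates F\<close> \<open>y \<in> dtrans F v u\<close>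
    unfolding is_device_def by blast
  ultimately show ?case using Cons.IH[of u] by auto
qed

lemma reached_sub: "reached G t \<subseteq> dstates G"
  unfolding reached_def using reaches_states by fastforce

lemma renumber:
  fixes G :: "('a, 'x, 'o) scdevice"
  assumes "is_device G"
  shows "\<exists>G' :: (nat, 'x, 'o) scdevice. is_device G' \<and> lang G' = lang G \<and> (\<forall>t. outs G' t = outs G t)"
proof -
  let ?S = "dstates G"
  have fin: "finite ?S" using assms unfolding is_device_def by simp
  obtain h where h: "bij_betw h ?S {0..<card ?S}" using ex_bij_betw_finite_nat[OF fin] by blast
  define g where "g = inv_into ?S h"
  have inj: "inj_on h ?S" using h bij_betw_def by blast
  have gh: "\<And>v. v \<in> ?S \<Longrightarrow> g (h v) = v" unfolding g_def using inj by (simp add: inv_into_f_f)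
  have hg: "\<And>i. i \<in> h ` ?S \<Longrightarrow> h (g i) = i \<and> g i \<in> ?S" unfolding g_def
    by (simp add: f_inv_into_f inv_into_into)
  define G' :: "(nat, 'x, 'o) scdevice" where "G' = \<lparr>dstates = h ` ?S, dinit = h ` dinit G, dobs = dobs G,
     dtrans = \<lambda>i j. dtrans G (g i) (g j), doutset = doutset G, dout = \<lambda>i. dout G (g i)\<rparr>"
  have G'simps: "dstates G' = h ` ?S" "dinit G' = h ` dinit G" "dobs G' = dobs G"
    "dtrans G' = (\<lambda>i j. dtrans G (g i) (g j))" "doutset G' = doutset G" "dout G' = (\<lambda>i. dout G (g i))"
    unfolding G'_def by simp_all
  have R1: "reaches G' t i j \<Longrightarrow> i \<in> h ` ?S \<and> j \<in> h ` ?S \<and> reaches G t (g i) (g j)" for t i j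
  proof (induction t arbitrary: i)
    case (Nil i)
    then have "i = j \<and> i \<in> h ` ?S" by (auto simp: G'simps)
    then show ?case using hg[of i] by auto
  next
    case (Cons y t i)
    then obtain u where u: "u \<in> h ` ?S" "y \<in> dtrans G (g i) (g u)" "reaches G' t u j" "i \<in> h ` ?S"
      by (auto simp: G'simps)
    have "j \<in> h ` ?S" "reaches G t (g u) (g j)" using Cons.IH[OF u(3)] by simp_all
    moreover have "g u \<in> ?S" "g i \<in> ?S" using hg u by simp_all
    ultimately show ?case using u by auto
  qed
  have R2: "reaches G t v w \<Longrightarrow> reaches G' t (h v) (h w)" for t v w
  proof (induction t arbitrary: v)
    case Nil then show ?case by (auto simp: G'simps)
  next
    case (Cons y t v)
    then obtain u where u: "u \<in> ?S" "y \<in> dtrans G v u" "reaches G t u w" "v \<in> ?S"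
      by auto
    have "reaches G' t (h u) (h w)" using Cons.IH[OF u(3)] .
    moreover have "y \<in> dtrans G' (h v) (h u)" using u gh by (simp add: G'simps)
    ultimately show ?case using u by (auto simp: G'simps)
  qed
  have RR: "reached G' t = h ` reached G t" for t
  proof
    show "reached G' t \<subseteq> h ` reached G t"
    proof
      fix j assume "j \<in> reached G' t"
      then obtain i where i: "i \<in> h ` dinit G" "reaches G' t i j" unfolding reached_def by (auto simp: G'simps)
      then obtain v where v: "v \<in> dinit G" "i = h v" by auto
      have vS: "v \<in> ?S" using v assms unfolding is_device_def by blast
      have j: "j \<in> h ` ?S" "reaches G t (g i) (g j)" using R1[OF i(2)] by simp_all
      have "g i = v" using gh vS v by simp
      then have "g j \<in> reached G t" using j v unfolding reached_def by auto
      moreover have "h (g j) = j" using hg j by simp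
      ultimately show "j \<in> h ` reached G t" by (metis imageI)
    qed
  next
    show "h ` reached G t \<subseteq> reached G' t"
    proof
      fix x assume "x \<in> h ` reached G t"
      then obtain v w where "x = h w" "v \<in> dinit G" "reaches G t v w" unfolding reached_def by auto
      then show "x \<in> reached G' t" using R2 unfolding reached_def by (auto simp: G'simps)
    qed
  qed
  have "is_device G'" unfolding is_device_def G'simps
  proof (intro conjI ballI)
    show "finite (h ` ?S)" using fin by simp
    show "h ` ?S \<noteq> {}" "h ` dinit G \<subseteq> h ` ?S" "h ` dinit G \<noteq> {}" "finite (dobs G)"
      using assms unfolding is_device_def by auto
    fix v w assume "v \<in> h ` ?S" "w \<in> h ` ?S"
    then have "g v \<in> ?S" "g w \<in> ?S" using hg by simp_all
    then show "dtrans G (g v) (g w) \<subseteq> dobs G" using assms unfolding is_device_def by blast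
  next
    fix v assume "v \<in> h ` ?S"
    then have "g v \<in> ?S" using hg by simp_all
    then show "dout G (g v) \<subseteq> doutset G" "dout G (g v) \<noteq> {}" using assms unfolding is_device_def by blast+
  qed
  moreover have "lang G' = lang G" unfolding lang_def using RR by auto
  moreover have "outs G' t = outs G t" for t
  proof -
    have "outs G' t = (\<Union>v\<in>reached G t. dout G (g (h v)))" unfolding outs_def RR by (simp add: G'simps)
    also have "\<dots> = outs G t" unfolding outs_def using gh reached_sub[of G t]
      by (intro SUP_cong) auto
    finally show ?thesis .
  qed
  ultimately show ?thesis by blast
qed

fun chain :: "('d, 'm) monoid_scheme \<Rightarrow> ('y \<Rightarrow> 'd \<Rightarrow> 'y) \<Rightarrow> 'y \<Rightarrow> 'd list \<Rightarrow> 'y list \<Rightarrow> bool" where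
  "chain D act y [] [] = True"
| "chain D act y (d # ds) (y' # ys) = (d \<in> carrier D \<and> y' = act y d \<and> chain D act y' ds ys)"
| "chain D act y _ _ = False"

lemma chain_Nil[simp]: "chain D act y [] ys \<longleftrightarrow> ys = []"
  by (cases ys) auto

lemma chain_det: "chain D act y ds ys \<Longrightarrow> chain D act y ds zs \<Longrightarrow> ys = zs"
  by (induction D act y ds ys arbitrary: zs rule: chain.induct) (auto elim: chain.elims)

lemma chain_len: "chain D act y ds ys \<Longrightarrow> length ds = length ys"
  by (induction D act y ds ys rule: chain.induct) auto

lemma ball_Suc_split: "(\<forall>k\<in>{1..Suc n}. P k) \<longleftrightarrow> P 1 \<and> (\<forall>k\<in>{1..n}. P (Suc k))"
proof
  assume "\<forall>k\<in>{1..Suc n}. P k"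
  then show "P 1 \<and> (\<forall>k\<in>{1..n}. P (Suc k))" by simp
next
  assume a: "P 1 \<and> (\<forall>k\<in>{1..n}. P (Suc k))"
  show "\<forall>k\<in>{1..Suc n}. P k"
  proof
    fix k assume k: "k \<in> {1..Suc n}"
    show "P k"
    proof (cases "k = 1")
      case True then show ?thesis using a by simp
    next
      case False
      then have "k = Suc (k - 1)" "k - 1 \<in> {1..n}" using k by auto
      then show ?thesis using a by metis
    qed
  qed
qed

lemma chain_idx:
  assumes "right_action D Y act" "y \<in> Y"
  shows "(length ds = length ys \<and> (\<forall>k\<in>{1..length ds}. ((y#ys)!(k-1), ds!(k-1), (y#ys)!k) \<in> action_variator D Y act))
         \<longleftrightarrow> chain D act y ds ys"
  using assms(2)
proof (induction ds arbitrary: y ys)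
  case Nil then show ?case by (cases ys) auto
next
  case (Cons d ds y ys)
  show ?case
  proof (cases ys)
    case Nil then show ?thesis by simp
  next
    case (Cons y' ys')
    let ?P = "\<lambda>k. ((y#ys)!(k-1), (d#ds)!(k-1), (y#ys)!k) \<in> action_variator D Y act"
    let ?Q = "\<lambda>k. ((y'#ys')!(k-1), ds!(k-1), (y'#ys')!k) \<in> action_variator D Y act"
    have e1: "(\<forall>k\<in>{1..length (d#ds)}. ?P k) \<longleftrightarrow> ?P 1 \<and> (\<forall>k\<in>{1..length ds}. ?P (Suc k))"
      using ball_Suc_split[of "length ds" ?P] by simp
    have e2: "(\<forall>k\<in>{1..length ds}. ?P (Suc k)) \<longleftrightarrow> (\<forall>k\<in>{1..length ds}. ?Q k)"
    proof -
      have "?P (Suc k) \<longleftrightarrow> ?Q k" if "k \<in> {1..length ds}" for k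
        using that Cons by (cases k) auto
      then show ?thesis by blast
    qed
    have av: "?P 1 \<longleftrightarrow> d \<in> carrier D \<and> y' = act y d"
      using Cons.prems Cons unfolding action_variator_def by auto
    have yd: "d \<in> carrier D \<Longrightarrow> act y d \<in> Y" using assms(1) Cons.prems unfolding right_action_def by auto
    have "(length (d#ds) = length ys \<and> (\<forall>k\<in>{1..length (d#ds)}. ?P k)) \<longleftrightarrow>
          (d \<in> carrier D \<and> y' = act y d) \<and> (length ds = length ys' \<and> (\<forall>k\<in>{1..length ds}. ?Q k))"
      using e1 e2 av Cons by auto
    also have "\<dots> \<longleftrightarrow> (d \<in> carrier D \<and> y' = act y d) \<and> chain D act y' ds ys'"
      using Cons.IH[of y' ys'] yd by blast
    also have "\<dots> \<longleftrightarrow> chain D act y (d#ds) ys" using Cons by simp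
    finally show ?thesis .
  qed
qed

lemma chain_ex:
  assumes "\<And>a b. a \<in> Y \<Longrightarrow> b \<in> Y \<Longrightarrow> \<exists>d\<in>carrier D. act a d = b"
  shows "y \<in> Y \<Longrightarrow> set ys \<subseteq> Y \<Longrightarrow> \<exists>ds. chain D act y ds ys"
proof (induction ys arbitrary: y)
  case Nil then show ?case by (metis chain.simps(1))
next
  case (Cons y' ys)
  then obtain d where "d \<in> carrier D" "act y d = y'" using assms by force
  moreover obtain ds where "chain D act y' ds ys" using Cons by auto
  ultimately have "chain D act y (d#ds) (y'#ys)" by simp
  then show ?case by blast
qed

definition GS :: "('v, 'y, 'o) scdevice \<Rightarrow> ('v \<times> 'y option) set" where
  "GS F = dstates F \<times> insert None (Some ` dobs F)"

definition Gdev :: "('v, 'y, 'o) scdevice \<Rightarrow> ('d, 'm) monoid_scheme \<Rightarrow> ('y \<Rightarrow> 'd \<Rightarrow> 'y)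
   \<Rightarrow> ('v \<times> 'y option, 'y + 'd, 'o) scdevice" where
  "Gdev F D act = \<lparr>dstates = GS F, dinit = dinit F \<times> {None},
     dobs = Inl ` dobs F \<union> Inr ` carrier D,
     dtrans = \<lambda>(v, q) (w, q'). (case q of
         None \<Rightarrow> {Inl y | y. y \<in> dtrans F v w \<and> q' = Some y}
       | Some y \<Rightarrow> {Inr d | d. d \<in> carrier D \<and> q' = Some (act y d) \<and> act y d \<in> dtrans F v w}),
     doutset = doutset F, dout = \<lambda>(v, q). dout F v\<rparr>"

lemma Gsimps:
  "dstates (Gdev F D act) = GS F" "dinit (Gdev F D act) = dinit F \<times> {None}"
  "dobs (Gdev F D act) = Inl ` dobs F \<union> Inr ` carrier D"
  "dtrans (Gdev F D act) (v, None) (w, q') = {Inl y | y. y \<in> dtrans F v w \<and> q' = Some y}"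
  "dtrans (Gdev F D act) (v, Some y) (w, q') = {Inr d | d. d \<in> carrier D \<and> q' = Some (act y d) \<and> act y d \<in> dtrans F v w}"
  "doutset (Gdev F D act) = doutset F" "dout (Gdev F D act) (v, q) = dout F v"
  by (simp_all add: Gdev_def)

lemma Gdev_device:
  assumes "is_device F" "finite (carrier D)"
  shows "is_device (Gdev F D act)"
  unfolding is_device_def
proof (intro conjI ballI)
  show "finite (dstates (Gdev F D act))" "dstates (Gdev F D act) \<noteq> {}"
    "dinit (Gdev F D act) \<subseteq> dstates (Gdev F D act)" "dinit (Gdev F D act) \<noteq> {}"
    "finite (dobs (Gdev F D act))"
    using assms unfolding is_device_def Gsimps GS_def by auto
next
  fix v w assume vw: "v \<in> dstates (Gdev F D act)" "w \<in> dstates (Gdev F D act)"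
  obtain a q b q' where ab: "v = (a, q)" "w = (b, q')" by (cases v, cases w) auto
  have abS: "a \<in> dstates F" "b \<in> dstates F" using vw ab by (auto simp: Gsimps GS_def)
  have sub: "dtrans F a b \<subseteq> dobs F" using assms abS unfolding is_device_def by blast
  show "dtrans (Gdev F D act) v w \<subseteq> dobs (Gdev F D act)"
  proof (cases q)
    case None then show ?thesis using ab sub by (auto simp: Gsimps)
  next
    case (Some y) then show ?thesis using ab by (auto simp: Gsimps)
  qed
next
  fix v assume "v \<in> dstates (Gdev F D act)"
  obtain a q where ab: "v = (a, q)" by (cases v)
  have "a \<in> dstates F" using \<open>v \<in> dstates (Gdev F D act)\<close> ab by (auto simp: Gsimps GS_def)
  then show "dout (Gdev F D act) v \<subseteq> doutset (Gdev F D act)" "dout (Gdev F D act) v \<noteq> {}"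
    using assms ab unfolding is_device_def by (auto simp: Gsimps)
qed


lemma Inr_mem: "Inr d \<in> {Inr d' | d'. P d'} \<longleftrightarrow> P d" by blast
lemma Inl_mem: "Inl y \<in> {Inl y' | y'. P y'} \<longleftrightarrow> P y" by blast

lemma G_reach_Inr:
  assumes ra: "right_action D (dobs F) act"
  shows "y \<in> dobs F \<Longrightarrow> reaches (Gdev F D act) (map Inr ds) (v, Some y) x \<longleftrightarrow>
     (\<exists>ys. chain D act y ds ys \<and> reaches F ys v (fst x) \<and> snd x = Some (last (y#ys)))"
proof (induction ds arbitrary: v y)
  case Nil
  obtain a b where x: "x = (a, b)" by (cases x)
  show ?case using Nil x by (auto simp: Gsimps GS_def)
next
  case (Cons d ds v y)
  have yd: "d \<in> carrier D \<Longrightarrow> act y d \<in> dobs F" using ra Cons.prems unfolding right_action_def by auto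
  show ?case
  proof
    assume "reaches (Gdev F D act) (map Inr (d # ds)) (v, Some y) x"
    then have "(v, Some y) \<in> GS F \<and> (\<exists>u\<in>GS F. Inr d \<in> dtrans (Gdev F D act) (v, Some y) u \<and>
        reaches (Gdev F D act) (map Inr ds) u x)" by (simp add: Gsimps)
    then obtain u where u0: "(v, Some y) \<in> GS F" "u \<in> GS F" "Inr d \<in> dtrans (Gdev F D act) (v, Some y) u"
        "reaches (Gdev F D act) (map Inr ds) u x" by blast
    obtain u1 q where uq: "u = (u1, q)" by (cases u)
    have d: "d \<in> carrier D" "q = Some (act y d)" "act y d \<in> dtrans F v u1"
      using u0(3) uq by (simp_all only: Gsimps Inr_mem)
    have "reaches (Gdev F D act) (map Inr ds) (u1, Some (act y d)) x" using u0(4) uq d by simp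
    then obtain ys where ys: "chain D act (act y d) ds ys" "reaches F ys u1 (fst x)" "snd x = Some (last (act y d # ys))"
      using Cons.IH[of "act y d" u1] yd d(1) by blast
    have "v \<in> dstates F" "u1 \<in> dstates F" using u0 uq by (auto simp: GS_def)
    then have "reaches F (act y d # ys) v (fst x)" using ys d by auto
    moreover have "chain D act y (d # ds) (act y d # ys)" using ys d by simp
    ultimately show "\<exists>ys. chain D act y (d # ds) ys \<and> reaches F ys v (fst x) \<and> snd x = Some (last (y # ys))"
      using ys(3) by (intro exI[of _ "act y d # ys"]) simp
  next
    assume "\<exists>ys. chain D act y (d # ds) ys \<and> reaches F ys v (fst x) \<and> snd x = Some (last (y # ys))"
    then obtain ys0 where c0: "chain D act y (d # ds) ys0" "reaches F ys0 v (fst x)" "snd x = Some (last (y # ys0))"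
      by blast
    then obtain y' ys where ys0: "ys0 = y' # ys" by (cases ys0) auto
    have d: "d \<in> carrier D" "y' = act y d" "chain D act y' ds ys" using c0 ys0 by auto
    have "v \<in> dstates F \<and> (\<exists>u\<in>dstates F. y' \<in> dtrans F v u \<and> reaches F ys u (fst x))"
      using c0(2) ys0 by simp
    then obtain u where u: "u \<in> dstates F" "y' \<in> dtrans F v u" "reaches F ys u (fst x)" "v \<in> dstates F" by blast
    have "snd x = Some (last (y' # ys))" using c0(3) ys0 by simp
    then have r: "reaches (Gdev F D act) (map Inr ds) (u, Some y') x"
      using Cons.IH[of y' u] yd d u by blast
    have m: "(u, Some y') \<in> GS F" "(v, Some y) \<in> GS F" using u yd d Cons.prems by (auto simp: GS_def)
    have t: "Inr d \<in> dtrans (Gdev F D act) (v, Some y) (u, Some y')"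
      using d u by (simp only: Gsimps Inr_mem)
    show "reaches (Gdev F D act) (map Inr (d # ds)) (v, Some y) x"
      using r m t unfolding list.map reaches.simps Gsimps(1) by blast
  qed
qed

lemma G_reach:
  assumes dev: "is_device F" and ra: "right_action D (dobs F) act"
  shows "reaches (Gdev F D act) (Inl y # map Inr ds) (v, None) x \<longleftrightarrow>
     (\<exists>ys. chain D act y ds ys \<and> reaches F (y#ys) v (fst x) \<and> snd x = Some (last (y#ys)))"
proof
  assume "reaches (Gdev F D act) (Inl y # map Inr ds) (v, None) x"
  then have "(v, None) \<in> GS F \<and> (\<exists>u\<in>GS F. Inl y \<in> dtrans (Gdev F D act) (v, None) u \<and>
        reaches (Gdev F D act) (map Inr ds) u x)" unfolding reaches.simps Gsimps(1) by blast
  then obtain u where u0: "(v, None) \<in> GS F" "u \<in> GS F" "Inl y \<in> dtrans (Gdev F D act) (v, None) u"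
        "reaches (Gdev F D act) (map Inr ds) u x" by blast
  obtain u1 q where uq: "u = (u1, q)" by (cases u)
  have q: "y \<in> dtrans F v u1" "q = Some y"
    using u0(3) uq by (simp_all only: Gsimps Inl_mem)
  have vs: "v \<in> dstates F" "u1 \<in> dstates F" using u0 uq by (auto simp: GS_def)
  then have yo: "y \<in> dobs F" using q dev unfolding is_device_def by blast
  have "reaches (Gdev F D act) (map Inr ds) (u1, Some y) x" using u0(4) uq q by simp
  then obtain ys where ys: "chain D act y ds ys" "reaches F ys u1 (fst x)" "snd x = Some (last (y # ys))"
    using G_reach_Inr[OF ra yo] by blast
  have "reaches F (y # ys) v (fst x)" using ys vs q by auto
  then show "\<exists>ys. chain D act y ds ys \<and> reaches F (y#ys) v (fst x) \<and> snd x = Some (last (y#ys))"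
    using ys by blast
next
  assume "\<exists>ys. chain D act y ds ys \<and> reaches F (y#ys) v (fst x) \<and> snd x = Some (last (y#ys))"
  then obtain ys where c: "chain D act y ds ys" "reaches F (y#ys) v (fst x)" "snd x = Some (last (y#ys))"
    by blast
  have "v \<in> dstates F \<and> (\<exists>u\<in>dstates F. y \<in> dtrans F v u \<and> reaches F ys u (fst x))"
    using c(2) by simp
  then obtain u where u: "u \<in> dstates F" "y \<in> dtrans F v u" "reaches F ys u (fst x)" "v \<in> dstates F" by blast
  then have yo: "y \<in> dobs F" using dev unfolding is_device_def by blast
  have r: "reaches (Gdev F D act) (map Inr ds) (u, Some y) x"
    using G_reach_Inr[OF ra yo] c u by blast
  have m: "(u, Some y) \<in> GS F" "(v, None) \<in> GS F" using u yo by (auto simp: GS_def)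
  have t: "Inl y \<in> dtrans (Gdev F D act) (v, None) (u, Some y)"
    using u by (simp only: Gsimps Inl_mem)
  show "reaches (Gdev F D act) (Inl y # map Inr ds) (v, None) x"
    using r m t unfolding reaches.simps Gsimps(1) by blast
qed

lemma G_main:
  assumes dev: "is_device F" and ra: "right_action D (dobs F) act"
    and c: "chain D act y ds ys" and l: "y # ys \<in> lang F"
  shows "Inl y # map Inr ds \<in> lang (Gdev F D act) \<and> outs (Gdev F D act) (Inl y # map Inr ds) \<subseteq> outs F (y # ys)"
proof
  from l obtain v w where vw: "v \<in> dinit F" "reaches F (y#ys) v w" unfolding lang_def reached_def by auto
  then have "reaches (Gdev F D act) (Inl y # map Inr ds) (v, None) (w, Some (last (y#ys)))"
    using G_reach[OF dev ra] c by auto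
  moreover have "(v, None) \<in> dinit (Gdev F D act)" using vw by (simp add: Gsimps)
  ultimately have "(w, Some (last (y#ys))) \<in> reached (Gdev F D act) (Inl y # map Inr ds)"
    unfolding reached_def by blast
  then show "Inl y # map Inr ds \<in> lang (Gdev F D act)" unfolding lang_def by blast
  show "outs (Gdev F D act) (Inl y # map Inr ds) \<subseteq> outs F (y # ys)"
  proof
    fix o' assume "o' \<in> outs (Gdev F D act) (Inl y # map Inr ds)"
    then obtain x where x0: "x \<in> reached (Gdev F D act) (Inl y # map Inr ds)" "o' \<in> dout (Gdev F D act) x"
      unfolding outs_def by blast
    then obtain i where i: "i \<in> dinit (Gdev F D act)" "reaches (Gdev F D act) (Inl y # map Inr ds) i x"
      unfolding reached_def by blast
    then obtain v where v: "i = (v, None)" "v \<in> dinit F" by (auto simp: Gsimps)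
    obtain a b where ab: "x = (a, b)" by (cases x)
    have x: "v \<in> dinit F" "reaches (Gdev F D act) (Inl y # map Inr ds) (v, None) x" "o' \<in> dout F (fst x)"
      using i v x0 ab by (auto simp: Gsimps)
    then obtain ys' where "chain D act y ds ys'" "reaches F (y#ys') v (fst x)"
      using G_reach[OF dev ra] by blast
    with c chain_det have "reaches F (y#ys) v (fst x)" by metis
    then show "o' \<in> outs F (y # ys)" using x unfolding outs_def reached_def by auto
  qed
qed

lemma G_nil:
  assumes dev: "is_device F"
  shows "[] \<in> lang (Gdev F D act) \<and> outs (Gdev F D act) [] \<subseteq> outs F []"
proof -
  have di: "dinit F \<subseteq> dstates F" "dinit F \<noteq> {}" using dev unfolding is_device_def by auto
  have rr: "reached (Gdev F D act) [] = dinit F \<times> {None}"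
  proof -
    have "reached (Gdev F D act) [] = {w. \<exists>v\<in>dinit F \<times> {None}. v = w \<and> v \<in> GS F}"
      unfolding reached_def reaches.simps Gsimps(1,2) by blast
    also have "\<dots> = dinit F \<times> {None}" using di(1) unfolding GS_def by blast
    finally show ?thesis .
  qed
  have rF: "reached F [] = dinit F" using di(1) unfolding reached_def by auto
  have "[] \<in> lang (Gdev F D act)" unfolding lang_def using rr di(2) by simp
  moreover have "outs (Gdev F D act) [] \<subseteq> outs F []"
  proof
    fix o' assume "o' \<in> outs (Gdev F D act) []"
    then obtain x where "x \<in> dinit F \<times> {None}" "o' \<in> dout (Gdev F D act) x" unfolding outs_def rr by blast
    then obtain v where "v \<in> dinit F" "o' \<in> dout F v" by (auto simp: Gsimps)
    then show "o' \<in> outs F []" unfolding outs_def rF by blast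
  qed
  ultimately show ?thesis by blast
qed

lemma delta_intro1: "([], []) \<in> delta_rel F B"
  unfolding delta_rel_def by simp

lemma delta_intro2: "y \<in> dobs F \<Longrightarrow> [y] \<in> lang F \<Longrightarrow> ([y], [Inl y]) \<in> delta_rel F B"
  unfolding delta_rel_def by (intro UnI1 UnI2) simp

lemma delta_intro3: "s \<in> lang F \<Longrightarrow> length s \<ge> 2 \<Longrightarrow> length ds = length s - 1 \<Longrightarrow>
   (\<forall>k\<in>{1..length ds}. (s ! (k - 1), ds ! (k - 1), s ! k) \<in> B) \<Longrightarrow>
   (s, Inl (s ! 0) # map Inr ds) \<in> delta_rel F B"
  unfolding delta_rel_def by (intro UnI2 CollectI exI[of _ s] exI[of _ ds]) simp

lemma sim_irrel:
  assumes "output_simulates F G R" "lang G' = lang G" "\<forall>t. outs G' t = outs G t"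
  shows "output_simulates F G' R"
  using assms unfolding output_simulates_def by auto

theorem proposition4:
  fixes F :: "('v, 'y, 'o) scdevice"
    and D :: "('d, 'm) monoid_scheme"
    and act :: "'y \<Rightarrow> 'd \<Rightarrow> 'y"
  assumes "is_device F"
    and "monoid D"
    and "right_action D (dobs F) act"
    and "group D"
    and "finite (carrier D)"
    and "y0 \<in> dobs F"
    and "{act y0 d | d. d \<in> carrier D} = dobs F"
  shows "\<exists>F' :: (nat, 'y + 'd, 'o) scdevice.
           is_device F' \<and>
           output_simulates F F' (delta_rel F (action_variator D (dobs F) act))"
proof -
  note dev = assms(1) and ra = assms(3)
  let ?G = "Gdev F D act"
  let ?AV = "action_variator D (dobs F) act"
  let ?R = "delta_rel F ?AV"
  have trans: "\<exists>d\<in>carrier D. act a d = b" if "a \<in> dobs F" "b \<in> dobs F" for a b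
  proof -
    have "a \<in> {act y0 d | d. d \<in> carrier D}" "b \<in> {act y0 d | d. d \<in> carrier D}"
      using that assms(7) by simp_all
    then obtain p q where pq: "p \<in> carrier D" "q \<in> carrier D" "a = act y0 p" "b = act y0 q"
      by blast
    have ic: "inv\<^bsub>D\<^esub> p \<in> carrier D" using group.inv_closed[OF assms(4) pq(1)] .
    have dc: "inv\<^bsub>D\<^esub> p \<otimes>\<^bsub>D\<^esub> q \<in> carrier D" using monoid.m_closed[OF assms(2) ic pq(2)] .
    have "act a (inv\<^bsub>D\<^esub> p \<otimes>\<^bsub>D\<^esub> q) = act y0 (p \<otimes>\<^bsub>D\<^esub> (inv\<^bsub>D\<^esub> p \<otimes>\<^bsub>D\<^esub> q))"
      unfolding pq(3) using ra assms(6) pq(1) dc unfolding right_action_def by simp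
    also have "p \<otimes>\<^bsub>D\<^esub> (inv\<^bsub>D\<^esub> p \<otimes>\<^bsub>D\<^esub> q) = (p \<otimes>\<^bsub>D\<^esub> inv\<^bsub>D\<^esub> p) \<otimes>\<^bsub>D\<^esub> q"
      using monoid.m_assoc[OF assms(2) pq(1) ic pq(2)] by simp
    also have "\<dots> = q" using group.r_inv[OF assms(4) pq(1)] monoid.l_one[OF assms(2) pq(2)] by simp
    finally show ?thesis using dc pq(4) by blast
  qed
  have delta_cases: "t = [] \<and> s = [] \<or> (\<exists>y ys ds. s = y # ys \<and> t = Inl y # map Inr ds \<and>
      length ds = length ys \<and> (\<forall>k\<in>{1..length ds}. ((y#ys)!(k-1), ds!(k-1), (y#ys)!k) \<in> ?AV))"
    if st0: "(s, t) \<in> ?R" for s t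
  proof -
    consider (a) "s = [] \<and> t = []" | (b) y where "s = [y]" "t = [Inl y]"
      | (c) ds where "length s \<ge> 2" "length ds = length s - 1" "t = Inl (s ! 0) # map Inr ds"
          "\<forall>k\<in>{1..length ds}. (s ! (k - 1), ds ! (k - 1), s ! k) \<in> ?AV"
      using st0 unfolding delta_rel_def by blast
    then show ?thesis
    proof cases
      case a then show ?thesis by blast
    next
      case (b y) then show ?thesis by (intro disjI2 exI[of _ y] exI[of _ "[]"]) simp
    next
      case (c ds)
      then obtain y ys where "s = y # ys" by (cases s) auto
      then show ?thesis using c by (intro disjI2 exI[of _ y] exI[of _ ys] exI[of _ ds]) simp
    qed
  qed
  have sim: "output_simulates F ?G ?R"
    unfolding output_simulates_def
  proof (intro ballI conjI allI impI)
    fix s assume s: "s \<in> lang F"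
    then obtain v w where vw: "v \<in> dinit F" "reaches F s v w" unfolding lang_def reached_def by auto
    have so: "set s \<subseteq> dobs F" using reaches_obs[OF dev vw(2)] .
    show "\<exists>t\<in>lang ?G. (s, t) \<in> ?R"
    proof (cases s)
      case Nil
      have "([], []) \<in> ?R" by (rule delta_intro1)
      then show ?thesis using Nil G_nil[OF dev, of D act] by blast
    next
      case (Cons y ys)
      have yo: "y \<in> dobs F" "set ys \<subseteq> dobs F" using so Cons by auto
      obtain ds where c: "chain D act y ds ys" using chain_ex[of "dobs F" D act, OF trans yo] by blast
      have L: "Inl y # map Inr ds \<in> lang ?G" using G_main[OF dev ra c] s Cons by blast
      show ?thesis
      proof (cases ys)
        case Nil
        then have "ds = []" using chain_len[OF c] by simp
        moreover have "([y], [Inl y]) \<in> ?R" using s Cons Nil yo by (simp add: delta_intro2)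
        ultimately show ?thesis using L Cons Nil by auto
      next
        case (Cons y' ys')
        have ix: "length ds = length ys \<and> (\<forall>k\<in>{1..length ds}. ((y#ys)!(k-1), ds!(k-1), (y#ys)!k) \<in> ?AV)"
          using chain_idx[OF ra yo(1)] c by blast
        have "length s \<ge> 2" "length ds = length s - 1" "s ! 0 = y"
          using \<open>s = y # ys\<close> Cons ix by auto
        then have "(s, Inl (s!0) # map Inr ds) \<in> ?R" using ix s \<open>s = y # ys\<close>
          by (intro delta_intro3) simp_all
        then show ?thesis using L \<open>s ! 0 = y\<close> by auto
      qed
    qed
  next
    fix s t assume s: "s \<in> lang F" and st: "(s, t) \<in> ?R"
    then obtain v w where vw: "v \<in> dinit F" "reaches F s v w" unfolding lang_def reached_def by auto
    have so: "set s \<subseteq> dobs F" using reaches_obs[OF dev vw(2)] .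
    have "t \<in> lang ?G \<and> outs ?G t \<subseteq> outs F s"
      using delta_cases[OF st]
    proof
      assume "t = [] \<and> s = []"
      then show ?thesis using G_nil[OF dev, of D act] by simp
    next
      assume "\<exists>y ys ds. s = y # ys \<and> t = Inl y # map Inr ds \<and>
        length ds = length ys \<and> (\<forall>k\<in>{1..length ds}. ((y#ys)!(k-1), ds!(k-1), (y#ys)!k) \<in> ?AV)"
      then obtain y ys ds where sy: "s = y # ys" "t = Inl y # map Inr ds"
        "length ds = length ys \<and> (\<forall>k\<in>{1..length ds}. ((y#ys)!(k-1), ds!(k-1), (y#ys)!k) \<in> ?AV)"
        by blast
      have yo: "y \<in> dobs F" using so sy by auto
      have c: "chain D act y ds ys" using chain_idx[OF ra yo] sy(3) by blast
      show ?thesis using G_main[OF dev ra c] s sy by simp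
    qed
    then show "t \<in> lang ?G" "outs ?G t \<subseteq> outs F s" by auto
  qed
  obtain G' :: "(nat, 'y + 'd, 'o) scdevice" where
    G': "is_device G'" "lang G' = lang ?G" "\<forall>t. outs G' t = outs ?G t"
    using renumber[OF Gdev_device[OF dev assms(5)]] by blast
  show ?thesis using G' sim_irrel[OF sim G'(2,3)] by blast
qed

end
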